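(* Let $B_1,B_2$ be finite commutative groups and $q_1,\dots,q_n>1$ integers, $0\le s\le n$. If $q_1q_2\cdots q_s$ is coprime to $|B_2|$ and $q_{s+1}\cdots q_n$ is coprime to $|B_1|$, then $$(B_1\times B_2)\binom{X_1,\dots,X_n}{\mathbb{Z}_{q_1}\times\cdots\times\mathbb{Z}_{q_n}}=B_1\binom{X_1,\dots,X_s}{\mathbb{Z}_{q_1}\times\cdots\times\mathbb{Z}_{q_s}}\times B_2\binom{X_{s+1},\dots,X_n}{\mathbb{Z}_{q_{s+1}}\times\cdots\times\mathbb{Z}_{q_n}},$$ i.e. a polyfract $(P_1,P_2)$ over $B_1\times B_2$ is $(q_1,\dots,q_n)$-periodic if and only if $P_1$ involves only $X_1,\dots,X_s$ and is $(q_1,\dots,q_s)$-periodic, and $P_2$ involves only $X_{s+1},\dots,X_n$ and is $(q_{s+1},\dots,q_n)$-periodic.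
   Context: $\mathbb{Z}_r=\mathbb{Z}/r\mathbb{Z}$; $\binom{X}{\delta}=X(X-1)\cdots(X-\delta+1)/\delta!$, $\binom{X}{0}=1$. For a finitely generated commutative group $B$, a $B$-polyfract in $X_1,\dots,X_n$ is a formal finite sum $P=\sum_{\delta\in\mathbb{N}^n}P_\delta\prod_j\binom{X_j}{\delta_j}$ with $P_\delta\in B$, evaluated at $x\in\mathbb{Z}^n$ by $P(x)=\sum_\delta(\prod_j\binom{x_j}{\delta_j})P_\delta$; a polyfract over $B_1\times B_2$ is identified with the pair of its coordinate polyfracts. "$P$ involves $X_j$" means some $\delta$ with $\delta_j>0$ has $P_\delta\ne0$. $B\binom{X_1,\dots,X_n}{\mathbb{Z}_{q_1}\times\cdots\times\mathbb{Z}_{q_n}}$ is the set of $B$-polyfracts whose evaluation map on $\mathbb{Z}^n$ is $q_j$-periodic in the $j$-th variable for all $j$. *)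

theory Defs
  imports Main "HOL-Library.Product_Plus"
begin

definition zscale :: "int \<Rightarrow> 'b::ab_group_add \<Rightarrow> 'b" where
  "zscale k b = (if 0 \<le> k then (\<Sum>i<nat k. b) else - (\<Sum>i<nat (- k). b))"

(* binom(x, d) = x(x-1)...(x-d+1)/d! for integer x (exact division) *)
definition zbinom :: "int \<Rightarrow> nat \<Rightarrow> int" where
  "zbinom x d = (\<Prod>i<d. x - int i) div fact d"

(* A B-polyfract in the n variables X_0,...,X_{n-1} (0-based indices):
   a coefficient function on multi-indices delta :: nat => nat with finite support,
   where only multi-indices with delta j = 0 for j >= n carry nonzero coefficients.
   P delta is the coefficient of prod_j binom(X_j, delta_j). *)
definition polyfract :: "nat \<Rightarrow> ((nat \<Rightarrow> nat) \<Rightarrow> 'b::ab_group_add) \<Rightarrow> bool" where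
  "polyfract n P \<longleftrightarrow> finite {\<delta>. P \<delta> \<noteq> 0} \<and> (\<forall>\<delta>. P \<delta> \<noteq> 0 \<longrightarrow> (\<forall>j. n \<le> j \<longrightarrow> \<delta> j = 0))"

definition pf_eval :: "nat \<Rightarrow> ((nat \<Rightarrow> nat) \<Rightarrow> 'b::ab_group_add) \<Rightarrow> (nat \<Rightarrow> int) \<Rightarrow> 'b" where
  "pf_eval n P x = (\<Sum>\<delta>\<in>{\<delta>. P \<delta> \<noteq> 0}. zscale (\<Prod>j<n. zbinom (x j) (\<delta> j)) (P \<delta>))"

definition involves :: "((nat \<Rightarrow> nat) \<Rightarrow> 'b::zero) \<Rightarrow> nat \<Rightarrow> bool" where
  "involves P j \<longleftrightarrow> (\<exists>\<delta>. 0 < \<delta> j \<and> P \<delta> \<noteq> 0)"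

(* Membership in B binom(X_0..X_{n-1} ; Z_{q_0} x ... x Z_{q_{n-1}}):
   a polyfract whose evaluation map on Z^n is q_j-periodic in the j-th variable. *)
definition periodic_pf :: "nat \<Rightarrow> (nat \<Rightarrow> int) \<Rightarrow> ((nat \<Rightarrow> nat) \<Rightarrow> 'b::ab_group_add) \<Rightarrow> bool" where
  "periodic_pf n q P \<longleftrightarrow> polyfract n P \<and>
     (\<forall>x j. j < n \<longrightarrow> pf_eval n P (x(j := x j + q j)) = pf_eval n P x)"

end

theory Submission imports Defs "HOL.Binomial_Plus" begin

lemma zbinom_Suc_Suc: "zbinom (x+1) (Suc k) = zbinom x k + zbinom x (Suc k)"
  using gbinomial_int_Suc_Suc[of x k] unfolding gbinomial_prod_rev zbinom_def atLeast0LessThan .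

lemma zbinom_0 [simp]: "zbinom x 0 = 1"
  by (simp add: zbinom_def)

lemma zbinom_1 [simp]: "zbinom x (Suc 0) = x"
  by (simp add: zbinom_def)

lemma zbinom_nn [simp]: "zbinom (int m) m = 1"
  using gbinomial_int_n_n[of m] unfolding gbinomial_prod_rev zbinom_def atLeast0LessThan .

lemma zbinom_eq0: "m < k \<Longrightarrow> zbinom (int m) k = 0"
  using gbinomial_eq_0_int[of m k] unfolding gbinomial_prod_rev zbinom_def atLeast0LessThan .

lemma nsum_Suc: "(\<Sum>i<Suc m. (b::'b::ab_group_add)) = (\<Sum>i<m. b) + b"
  by simp

lemma zscale_step: "zscale (k+1) b = zscale k b + b"
proof (cases "0 \<le> k")
  case True
  then have "nat (k+1) = Suc (nat k)" by simp
  then show ?thesis using True by (simp add: zscale_def)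
next
  case False
  show ?thesis
  proof (cases "k = -1")
    case True then show ?thesis by (simp add: zscale_def)
  next
    case F2: False
    then have "nat (-k) = Suc (nat (-(k+1)))" using False by simp
    then show ?thesis using False F2 by (simp add: zscale_def)
  qed
qed

lemma zscale_0 [simp]: "zscale 0 b = 0" by (simp add: zscale_def)
lemma zscale_1 [simp]: "zscale 1 b = b" by (simp add: zscale_def)
lemma zscale_zero [simp]: "zscale k 0 = 0" by (simp add: zscale_def)

lemma zscale_step': "zscale (k - 1) b = zscale k b - b"
  using zscale_step[of "k-1" b] by (simp add: eq_diff_eq)

lemma zscale_add: "zscale (k + l) b = zscale k b + zscale l b"
proof (induction l rule: int_induct[where k=0])
  case base then show ?case by simp
next
  case (step1 i)
  have "zscale (k + (i+1)) b = zscale ((k + i) + 1) b" by (simp only: add.assoc)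
  also have "\<dots> = zscale k b + zscale i b + b" using step1 zscale_step[of "k+i" b] by simp
  also have "\<dots> = zscale k b + zscale (i+1) b" using zscale_step[of i b] by (simp add: add.assoc)
  finally show ?case .
next
  case (step2 i)
  have "zscale (k + (i-1)) b = zscale ((k + i) - 1) b" by (simp only: add_diff_eq)
  also have "\<dots> = zscale k b + zscale i b - b" using step2 zscale_step'[of "k+i" b] by simp
  also have "\<dots> = zscale k b + zscale (i-1) b" using zscale_step'[of i b] by (simp add: add_diff_eq)
  finally show ?case .
qed

lemma zscale_minus: "zscale (- k) b = - zscale k b"
  using zscale_add[of k "-k" b] by (simp add: add_eq_0_iff)

lemma zscale_diff: "zscale (k - l) b = zscale k b - zscale l b"
  using zscale_add[of k "-l" b] zscale_minus[of l b] by simp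

lemma zscale_mult: "zscale (k * l) b = zscale k (zscale l b)"
proof (induction k rule: int_induct[where k=0])
  case base then show ?case by simp
next
  case (step1 i)
  have "zscale ((i+1) * l) b = zscale (i*l + l) b" by (simp add: distrib_right)
  also have "\<dots> = zscale (i+1) (zscale l b)" using step1 zscale_step[of i "zscale l b"] zscale_add[of "i*l" l b] by simp
  finally show ?case .
next
  case (step2 i)
  have "zscale ((i-1) * l) b = zscale (i*l - l) b" by (simp add: left_diff_distrib)
  also have "\<dots> = zscale (i-1) (zscale l b)" using step2 zscale_step'[of i "zscale l b"] zscale_diff[of "i*l" l b] by simp
  finally show ?case .
qed

lemma zscale_plus: "zscale k (a + b) = zscale k a + zscale k b"
proof (induction k rule: int_induct[where k=0])
  case base then show ?case by simp
next
  case (step1 i) then show ?case using zscale_step[of i "a+b"] zscale_step[of i a] zscale_step[of i b]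
    by (simp add: ac_simps)
next
  case (step2 i) then show ?case by (simp add: zscale_step' algebra_simps)
qed

lemma zscale_sum: "zscale k (\<Sum>x\<in>A. f x) = (\<Sum>x\<in>A. zscale k (f x))"
  by (induction A rule: infinite_finite_induct) (auto simp: zscale_plus)

lemma zscale_fst: "fst (zscale k p) = zscale k (fst p)"
  by (simp add: zscale_def fst_sum)
lemma zscale_snd: "snd (zscale k p) = zscale k (snd p)"
  by (simp add: zscale_def snd_sum)

lemma const_sum_card: "finite A \<Longrightarrow> (\<Sum>y\<in>A. b) = (\<Sum>i<card A. (b::'g::ab_group_add))"
  by (induction A rule: finite_induct) (auto simp: add.commute)

lemma card_kill: "zscale (int (card (UNIV::'g::{ab_group_add,finite} set))) (b::'g) = 0"
proof -
  have "(\<Sum>y\<in>UNIV. y) = (\<Sum>y\<in>UNIV. y + (b::'g))"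
    by (rule sum.reindex_bij_witness[where j="\<lambda>y. y - b" and i="\<lambda>y. y + b"]) auto
  also have "\<dots> = (\<Sum>y\<in>UNIV. y) + (\<Sum>y\<in>(UNIV::'g set). b)" by (simp add: sum.distrib)
  finally have "(\<Sum>y\<in>(UNIV::'g set). b) = 0" by simp
  moreover have "(\<Sum>y\<in>(UNIV::'g set). b) = (\<Sum>i<card (UNIV::'g set). b)"
    using const_sum_card[of "UNIV::'g set" b] by simp
  ultimately show ?thesis by (simp add: zscale_def)
qed

lemma coprime_kill:
  assumes "coprime q (int (card (UNIV::'g::{ab_group_add,finite} set)))" "zscale q (b::'g) = 0"
  shows "b = 0"
proof -
  obtain u v where uv: "u * q + v * int (card (UNIV::'g set)) = gcd q (int (card (UNIV::'g set)))"
    using bezout_int by blast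
  then have "u * q + v * int (card (UNIV::'g set)) = 1" using assms(1) by simp
  then have "b = zscale (u * q + v * int (card (UNIV::'g set))) b" by simp
  also have "\<dots> = 0" by (simp add: zscale_add zscale_mult assms(2) card_kill)
  finally show ?thesis .
qed

lemma uni:
  assumes kill: "\<forall>b. zscale q b = 0 \<longrightarrow> b = (0::'g::ab_group_add)"
  shows "(\<forall>t. g t = (\<Sum>d\<le>N. zscale (zbinom t d) (c d))) \<Longrightarrow> (\<forall>t. g (t+q) = g t) \<Longrightarrow> 1 \<le> d \<Longrightarrow> d \<le> N \<Longrightarrow> c d = (0::'g)"
proof (induction N arbitrary: g c d)
  case 0 then show ?case by simp
next
  case (Suc M)
  have gt: "g t = c 0 + (\<Sum>d\<le>M. zscale (zbinom t (Suc d)) (c (Suc d)))" for t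
    using Suc.prems(1) by (simp del: sum.atMost_Suc add: sum.atMost_Suc_shift)
  define g' where "g' t = g (t+1) - g t" for t
  have g': "\<forall>t. g' t = (\<Sum>d\<le>M. zscale (zbinom t d) (c (Suc d)))"
  proof
    fix t
    have "g (t+1) = c 0 + (\<Sum>d\<le>M. zscale (zbinom t d) (c (Suc d)) + zscale (zbinom t (Suc d)) (c (Suc d)))"
      using gt[of "t+1"] by (simp add: zbinom_Suc_Suc zscale_add)
    then show "g' t = (\<Sum>d\<le>M. zscale (zbinom t d) (c (Suc d)))"
      unfolding g'_def using gt[of t] by (simp add: sum.distrib)
  qed
  have per': "\<forall>t. g' (t+q) = g' t"
  proof
    fix t
    have "g (t + q + 1) = g (t+1)" using Suc.prems(2) spec[OF Suc.prems(2), of "t+1"] by (simp add: ac_simps)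
    then show "g' (t+q) = g' t" unfolding g'_def using Suc.prems(2) by simp
  qed
  have IH: "c (Suc d') = 0" if "1 \<le> d'" "d' \<le> M" for d'
    using Suc.IH[OF g' per' that] .
  show ?case
  proof (cases "d = 1")
    case False
    then obtain d' where "d = Suc d'" "1 \<le> d'" "d' \<le> M" using Suc.prems(3,4)
      by (metis One_nat_def Suc_le_mono Suc_pred less_one linorder_not_le not_less_eq_eq)
    then show ?thesis using IH by simp
  next
    case True
    have g1: "g t = c 0 + zscale t (c 1)" for t
    proof -
      have "(\<Sum>d\<le>M. zscale (zbinom t (Suc d)) (c (Suc d))) = (\<Sum>d\<in>{0}. zscale (zbinom t (Suc d)) (c (Suc d)))"
        by (rule sum.mono_neutral_right) (auto simp: IH)
      then show ?thesis using gt[of t] by simp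
    qed
    have "zscale q (c 1) = 0" using g1[of q] g1[of 0] spec[OF Suc.prems(2), of 0] by simp
    then show ?thesis using kill True by simp
  qed
qed

lemma uniq:
  fixes c :: "(nat\<Rightarrow>nat) \<Rightarrow> 'g::ab_group_add"
  assumes fJ: "finite J" and fS: "finite S"
    and inj: "\<forall>\<delta>\<in>S. \<forall>\<delta>'\<in>S. (\<forall>i\<in>J. \<delta> i = \<delta>' i) \<longrightarrow> \<delta> = \<delta>'"
    and zero: "\<forall>x. (\<Sum>\<delta>\<in>S. zscale (\<Prod>i\<in>J. zbinom (x i) (\<delta> i)) (c \<delta>)) = 0"
  shows "\<forall>\<delta>\<in>S. c \<delta> = 0"
proof (rule ccontr)
  assume H: "\<not> (\<forall>\<delta>\<in>S. c \<delta> = 0)"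
  define S' where "S' = {\<delta>\<in>S. c \<delta> \<noteq> 0}"
  define h where "h \<delta> = (\<Sum>i\<in>J. \<delta> i)" for \<delta> :: "nat\<Rightarrow>nat"
  have ne: "S' \<noteq> {}" and fS': "finite S'" using H fS unfolding S'_def by auto
  define m where "m = Min (h ` S')"
  have "m \<in> h ` S'" unfolding m_def using ne fS' by (intro Min_in) auto
  then obtain \<delta>0 where d0: "\<delta>0 \<in> S'" "h \<delta>0 = m" by auto
  have mle: "m \<le> h \<delta>" if "\<delta> \<in> S'" for \<delta> unfolding m_def using fS' that by (intro Min_le) auto
  define x where "x i = int (\<delta>0 i)" for i
  have d0S: "\<delta>0 \<in> S" using d0 unfolding S'_def by auto
  have term0: "zscale (\<Prod>i\<in>J. zbinom (x i) (\<delta> i)) (c \<delta>) = 0" if "\<delta> \<in> S" "\<delta> \<noteq> \<delta>0" for \<delta>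
  proof (cases "c \<delta> = 0")
    case True then show ?thesis by simp
  next
    case False
    then have dS': "\<delta> \<in> S'" using that unfolding S'_def by auto
    show ?thesis
    proof (cases "\<exists>i\<in>J. \<delta>0 i < \<delta> i")
      case True
      then obtain i where "i \<in> J" "\<delta>0 i < \<delta> i" by auto
      then have "(\<Prod>i\<in>J. zbinom (x i) (\<delta> i)) = 0"
        by (intro prod_zero[OF fJ] bexI[of _ i]) (simp_all add: x_def zbinom_eq0)
      then show ?thesis by simp
    next
      case False
      then have le: "\<forall>i\<in>J. \<delta> i \<le> \<delta>0 i" by auto
      have "\<not> (\<forall>i\<in>J. \<delta> i = \<delta>0 i)"
      proof
        assume "\<forall>i\<in>J. \<delta> i = \<delta>0 i"
        then have "\<delta> = \<delta>0" using inj that(1) d0S by auto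
        then show False using that(2) by simp
      qed
      then obtain i where i: "i \<in> J" "\<delta> i \<noteq> \<delta>0 i" by auto
      have "h \<delta> < h \<delta>0" unfolding h_def
        by (rule sum_strict_mono_ex1[OF fJ]) (use le i in force)+
      then show ?thesis using mle[OF dS'] d0 by simp
    qed
  qed
  have "(\<Sum>\<delta>\<in>S. zscale (\<Prod>i\<in>J. zbinom (x i) (\<delta> i)) (c \<delta>))
      = zscale (\<Prod>i\<in>J. zbinom (x i) (\<delta>0 i)) (c \<delta>0) + (\<Sum>\<delta>\<in>S - {\<delta>0}. zscale (\<Prod>i\<in>J. zbinom (x i) (\<delta> i)) (c \<delta>))"
    using sum.remove[OF fS d0S] by blast
  also have "(\<Sum>\<delta>\<in>S - {\<delta>0}. zscale (\<Prod>i\<in>J. zbinom (x i) (\<delta> i)) (c \<delta>)) = 0"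
    by (rule sum.neutral) (use term0 in auto)
  also have "(\<Prod>i\<in>J. zbinom (x i) (\<delta>0 i)) = 1" by (simp add: x_def)
  finally have "(\<Sum>\<delta>\<in>S. zscale (\<Prod>i\<in>J. zbinom (x i) (\<delta> i)) (c \<delta>)) = c \<delta>0" by simp
  then show False using zero d0 unfolding S'_def by auto
qed

lemma eval_super:
  assumes "finite T" "{\<delta>. Pc \<delta> \<noteq> 0} \<subseteq> T"
  shows "pf_eval n Pc x = (\<Sum>\<delta>\<in>T. zscale (\<Prod>j<n. zbinom (x j) (\<delta> j)) (Pc \<delta>))"
  unfolding pf_eval_def by (rule sum.mono_neutral_left) (use assms in auto)

lemma polyfract_fst: "polyfract n P \<Longrightarrow> polyfract n (fst \<circ> P)"
proof -
  assume a: "polyfract n P"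
  have imp: "P \<delta> \<noteq> 0" if "(fst \<circ> P) \<delta> \<noteq> 0" for \<delta>
  proof
    assume "P \<delta> = 0"
    then have "(fst \<circ> P) \<delta> = 0" by simp
    then show False using that by contradiction
  qed
  have sub: "{\<delta>. (fst \<circ> P) \<delta> \<noteq> 0} \<subseteq> {\<delta>. P \<delta> \<noteq> 0}"
    using imp by blast
  have "finite {\<delta>. P \<delta> \<noteq> 0}" using a unfolding polyfract_def by blast
  then have "finite {\<delta>. (fst \<circ> P) \<delta> \<noteq> 0}" using sub finite_subset by blast
  moreover have "\<forall>\<delta>. (fst \<circ> P) \<delta> \<noteq> 0 \<longrightarrow> (\<forall>j. n \<le> j \<longrightarrow> \<delta> j = 0)"
    using a imp unfolding polyfract_def by blast
  ultimately show ?thesis unfolding polyfract_def by blast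
qed

lemma polyfract_snd: "polyfract n P \<Longrightarrow> polyfract n (snd \<circ> P)"
proof -
  assume a: "polyfract n P"
  have imp: "P \<delta> \<noteq> 0" if "(snd \<circ> P) \<delta> \<noteq> 0" for \<delta>
  proof
    assume "P \<delta> = 0"
    then have "(snd \<circ> P) \<delta> = 0" by simp
    then show False using that by contradiction
  qed
  have sub: "{\<delta>. (snd \<circ> P) \<delta> \<noteq> 0} \<subseteq> {\<delta>. P \<delta> \<noteq> 0}"
    using imp by blast
  have "finite {\<delta>. P \<delta> \<noteq> 0}" using a unfolding polyfract_def by blast
  then have "finite {\<delta>. (snd \<circ> P) \<delta> \<noteq> 0}" using sub finite_subset by blast
  moreover have "\<forall>\<delta>. (snd \<circ> P) \<delta> \<noteq> 0 \<longrightarrow> (\<forall>j. n \<le> j \<longrightarrow> \<delta> j = 0)"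
    using a imp unfolding polyfract_def by blast
  ultimately show ?thesis unfolding polyfract_def by blast
qed

lemma eval_pair:
  assumes "polyfract n P"
  shows "pf_eval n P x = (pf_eval n (fst \<circ> P) x, pf_eval n (snd \<circ> P) x)"
proof -
  have f: "finite {\<delta>. P \<delta> \<noteq> 0}" using assms unfolding polyfract_def by auto
  have s1: "{\<delta>. (fst \<circ> P) \<delta> \<noteq> 0} \<subseteq> {\<delta>. P \<delta> \<noteq> 0}" by auto
  have s2: "{\<delta>. (snd \<circ> P) \<delta> \<noteq> 0} \<subseteq> {\<delta>. P \<delta> \<noteq> 0}" by auto
  show ?thesis
    unfolding eval_super[OF f s1] eval_super[OF f s2]
    by (simp add: pf_eval_def fst_sum snd_sum zscale_fst zscale_snd prod_eq_iff)
qed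

lemma eval_reduce:
  assumes "polyfract m Pc" "m \<le> n"
  shows "pf_eval n Pc x = pf_eval m Pc x"
  unfolding pf_eval_def
proof (rule sum.cong[OF refl])
  fix \<delta> assume "\<delta> \<in> {\<delta>. Pc \<delta> \<noteq> 0}"
  then have z: "\<forall>j. m \<le> j \<longrightarrow> \<delta> j = 0" using assms(1) unfolding polyfract_def by auto
  have "(\<Prod>j<n. zbinom (x j) (\<delta> j)) = (\<Prod>j<m. zbinom (x j) (\<delta> j))"
    by (rule prod.mono_neutral_right) (use assms(2) z in auto)
  then show "zscale (\<Prod>j<n. zbinom (x j) (\<delta> j)) (Pc \<delta>) = zscale (\<Prod>j<m. zbinom (x j) (\<delta> j)) (Pc \<delta>)"
    by simp
qed

lemma eval_indep:
  assumes "\<forall>\<delta>. Pc \<delta> \<noteq> 0 \<longrightarrow> \<delta> j = 0"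
  shows "pf_eval n Pc (x(j := v)) = pf_eval n Pc x"
  unfolding pf_eval_def
proof (rule sum.cong[OF refl])
  fix \<delta> assume "\<delta> \<in> {\<delta>. Pc \<delta> \<noteq> 0}"
  then have z: "\<delta> j = 0" using assms by auto
  have "(\<Prod>i<n. zbinom ((x(j := v)) i) (\<delta> i)) = (\<Prod>i<n. zbinom (x i) (\<delta> i))"
    by (rule prod.cong[OF refl]) (use z in auto)
  then show "zscale (\<Prod>i<n. zbinom ((x(j := v)) i) (\<delta> i)) (Pc \<delta>) = zscale (\<Prod>i<n. zbinom (x i) (\<delta> i)) (Pc \<delta>)"
    by simp
qed

lemma eval_shift:
  assumes pf: "polyfract n Pc" and sn: "s \<le> n" and low: "\<forall>\<delta>. Pc \<delta> \<noteq> 0 \<longrightarrow> (\<forall>i<s. \<delta> i = 0)"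
  shows "pf_eval n Pc x = pf_eval (n-s) (\<lambda>\<delta>. Pc (\<lambda>j. if j < s then 0 else \<delta> (j - s))) (\<lambda>k. x (k+s))"
proof -
  define sh where "sh \<delta> = (\<lambda>j. if j < s then 0 else \<delta> (j - s))" for \<delta> :: "nat \<Rightarrow> nat"
  define Q where "Q \<delta> = Pc (sh \<delta>)" for \<delta>
  have inj: "inj sh"
  proof (rule injI)
    fix a b assume "sh a = sh b"
    then have "sh a (k + s) = sh b (k + s)" for k by simp
    then show "a = b" unfolding sh_def by (auto simp: fun_eq_iff)
  qed
  have supp: "{\<delta>. Pc \<delta> \<noteq> 0} = sh ` {\<delta>. Q \<delta> \<noteq> 0}"
  proof
    show "{\<delta>. Pc \<delta> \<noteq> 0} \<subseteq> sh ` {\<delta>. Q \<delta> \<noteq> 0}"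
    proof
      fix \<delta> assume d: "\<delta> \<in> {\<delta>. Pc \<delta> \<noteq> 0}"
      have e: "\<delta> = sh (\<lambda>k. \<delta> (k+s))" unfolding sh_def using d low by (auto simp: fun_eq_iff)
      then have "Q (\<lambda>k. \<delta> (k+s)) \<noteq> 0" using d unfolding Q_def by auto
      then show "\<delta> \<in> sh ` {\<delta>. Q \<delta> \<noteq> 0}" using e by blast
    qed
  qed (auto simp: Q_def)
  have pr: "(\<Prod>i<n. zbinom (x i) (sh \<delta> i)) = (\<Prod>k<n-s. zbinom (x (k+s)) (\<delta> k))" for \<delta>
  proof -
    have "(\<Prod>i<n. zbinom (x i) (sh \<delta> i)) = (\<Prod>i\<in>{0..<s}. zbinom (x i) (sh \<delta> i)) * (\<Prod>i\<in>{s..<n}. zbinom (x i) (sh \<delta> i))"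
      using prod.atLeastLessThan_concat[of 0 s n "\<lambda>i. zbinom (x i) (sh \<delta> i)"] sn by (simp add: atLeast0LessThan)
    also have "(\<Prod>i\<in>{0..<s}. zbinom (x i) (sh \<delta> i)) = 1" by (rule prod.neutral) (simp add: sh_def)
    also have "(\<Prod>i\<in>{s..<n}. zbinom (x i) (sh \<delta> i)) = (\<Prod>i\<in>{0+s..<(n-s)+s}. zbinom (x i) (sh \<delta> i))"
      using sn by simp
    also have "\<dots> = (\<Prod>k\<in>{0..<n-s}. zbinom (x (k+s)) (sh \<delta> (k+s)))" by (rule prod.shift_bounds_nat_ivl)
    also have "\<dots> = (\<Prod>k<n-s. zbinom (x (k+s)) (\<delta> k))" by (simp add: sh_def atLeast0LessThan)
    finally show ?thesis by simp
  qed
  have "pf_eval n Pc x = (\<Sum>\<delta>\<in>sh ` {\<delta>. Q \<delta> \<noteq> 0}. zscale (\<Prod>i<n. zbinom (x i) (\<delta> i)) (Pc \<delta>))"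
    unfolding pf_eval_def supp ..
  also have "\<dots> = (\<Sum>\<delta>\<in>{\<delta>. Q \<delta> \<noteq> 0}. zscale (\<Prod>i<n. zbinom (x i) (sh \<delta> i)) (Pc (sh \<delta>)))"
    by (rule sum.reindex[OF inj_on_subset[OF inj subset_UNIV], unfolded comp_def])
  also have "\<dots> = pf_eval (n-s) Q (\<lambda>k. x (k+s))"
    unfolding pf_eval_def pr Q_def ..
  finally show ?thesis unfolding Q_def sh_def .
qed

lemma no_involve:
  fixes Pc :: "(nat\<Rightarrow>nat) \<Rightarrow> 'g::ab_group_add"
  assumes pf: "polyfract n Pc" and j: "j < n" and kill: "\<forall>b. zscale q b = 0 \<longrightarrow> b = (0::'g)"
    and per: "\<forall>x. pf_eval n Pc (x(j := x j + q)) = pf_eval n Pc x"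
    and nz: "Pc \<delta>1 \<noteq> 0"
  shows "\<delta>1 j = 0"
proof -
  define S where "S = {\<delta>. Pc \<delta> \<noteq> 0}"
  have fS: "finite S" using pf unfolding polyfract_def S_def by blast
  have van: "\<delta> i = 0" if "\<delta> \<in> S" "n \<le> i" for \<delta> i using pf that unfolding polyfract_def S_def by blast
  define N where "N = (\<Sum>\<delta>\<in>S. \<delta> j)"
  define J where "J = {..<n} - {j}"
  have fJ: "finite J" unfolding J_def by simp
  have leN: "\<delta> j \<le> N" if "\<delta> \<in> S" for \<delta> unfolding N_def by (rule member_le_sum) (use that fS in auto)
  have cz: "(\<Sum>\<delta>\<in>{\<delta>\<in>S. \<delta> j = d}. zscale (\<Prod>i\<in>J. zbinom (x i) (\<delta> i)) (Pc \<delta>)) = 0"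
    if "1 \<le> d" "d \<le> N" for x d
  proof -
    define c where "c d = (\<Sum>\<delta>\<in>{\<delta>\<in>S. \<delta> j = d}. zscale (\<Prod>i\<in>J. zbinom (x i) (\<delta> i)) (Pc \<delta>))" for d
    define g where "g t = pf_eval n Pc (x(j:=t))" for t
    have gt: "\<forall>t. g t = (\<Sum>d\<le>N. zscale (zbinom t d) (c d))"
    proof
      fix t
      have "g t = (\<Sum>\<delta>\<in>S. zscale (zbinom t (\<delta> j)) (zscale (\<Prod>i\<in>J. zbinom (x i) (\<delta> i)) (Pc \<delta>)))"
        unfolding g_def pf_eval_def S_def[symmetric]
      proof (rule sum.cong[OF refl])
        fix \<delta>
        have "(\<Prod>i<n. zbinom ((x(j:=t)) i) (\<delta> i)) = zbinom ((x(j:=t)) j) (\<delta> j) * (\<Prod>i\<in>J. zbinom ((x(j:=t)) i) (\<delta> i))"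
          unfolding J_def by (rule prod.remove) (use j in auto)
        also have "(\<Prod>i\<in>J. zbinom ((x(j:=t)) i) (\<delta> i)) = (\<Prod>i\<in>J. zbinom (x i) (\<delta> i))"
          by (rule prod.cong[OF refl]) (auto simp: J_def)
        finally show "zscale (\<Prod>i<n. zbinom ((x(j:=t)) i) (\<delta> i)) (Pc \<delta>) = zscale (zbinom t (\<delta> j)) (zscale (\<Prod>i\<in>J. zbinom (x i) (\<delta> i)) (Pc \<delta>))"
          by (simp add: zscale_mult)
      qed
      also have "\<dots> = (\<Sum>d\<le>N. \<Sum>\<delta>\<in>{\<delta>\<in>S. \<delta> j = d}. zscale (zbinom t (\<delta> j)) (zscale (\<Prod>i\<in>J. zbinom (x i) (\<delta> i)) (Pc \<delta>)))"
        by (rule sum.group[symmetric]) (use fS leN in auto)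
      also have "\<dots> = (\<Sum>d\<le>N. zscale (zbinom t d) (c d))"
        unfolding c_def zscale_sum by (rule sum.cong[OF refl]) auto
      finally show "g t = (\<Sum>d\<le>N. zscale (zbinom t d) (c d))" .
    qed
    have gp: "\<forall>t. g (t+q) = g t"
    proof
      fix t
      have "(x(j:=t))(j := (x(j:=t)) j + q) = x(j := t+q)" by simp
      then show "g (t+q) = g t" unfolding g_def using spec[OF per, of "x(j:=t)"] by simp
    qed
    show ?thesis using uni[OF kill gt gp that] unfolding c_def .
  qed
  show ?thesis
  proof (rule ccontr)
    assume ne: "\<delta>1 j \<noteq> 0"
    define d where "d = \<delta>1 j"
    have d1S: "\<delta>1 \<in> S" using nz unfolding S_def by simp
    have "1 \<le> d" "d \<le> N" using ne leN[OF d1S] unfolding d_def by auto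
    note czd = cz[OF this]
    have "\<forall>\<delta>\<in>{\<delta>\<in>S. \<delta> j = d}. Pc \<delta> = 0"
    proof (rule uniq[OF fJ])
      show "finite {\<delta>\<in>S. \<delta> j = d}" using fS by simp
      show "\<forall>x. (\<Sum>\<delta>\<in>{\<delta>\<in>S. \<delta> j = d}. zscale (\<Prod>i\<in>J. zbinom (x i) (\<delta> i)) (Pc \<delta>)) = 0"
        using czd by blast
      show "\<forall>\<delta>\<in>{\<delta>\<in>S. \<delta> j = d}. \<forall>\<delta>'\<in>{\<delta>\<in>S. \<delta> j = d}. (\<forall>i\<in>J. \<delta> i = \<delta>' i) \<longrightarrow> \<delta> = \<delta>'"
      proof (intro ballI impI ext)
        fix \<delta> \<delta>' i
        assume a: "\<delta> \<in> {\<delta>\<in>S. \<delta> j = d}" "\<delta>' \<in> {\<delta>\<in>S. \<delta> j = d}" "\<forall>i\<in>J. \<delta> i = \<delta>' i"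
        show "\<delta> i = \<delta>' i"
        proof (cases "i \<in> J")
          case True then show ?thesis using a by blast
        next
          case False
          then have "i = j \<or> n \<le> i" unfolding J_def by auto
          then show ?thesis using a van[of \<delta> i] van[of \<delta>' i] by auto
        qed
      qed
    qed
    then show False using d1S nz unfolding d_def by auto
  qed
qed

theorem theorem3p14:
  fixes P :: "(nat \<Rightarrow> nat) \<Rightarrow> ('b1::{ab_group_add,finite} \<times> 'b2::{ab_group_add,finite})"
    and q :: "nat \<Rightarrow> int" and n s :: nat
  assumes "\<forall>j<n. q j > 1"
    and "s \<le> n"
    and "coprime (\<Prod>j<s. q j) (int (card (UNIV :: 'b2 set)))"
    and "coprime (\<Prod>j\<in>{s..<n}. q j) (int (card (UNIV :: 'b1 set)))"
    and "polyfract n P"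
  shows "periodic_pf n q P \<longleftrightarrow>
           ((\<forall>j. involves (fst \<circ> P) j \<longrightarrow> j < s)
            \<and> periodic_pf s q (fst \<circ> P)
            \<and> (\<forall>j. involves (snd \<circ> P) j \<longrightarrow> s \<le> j \<and> j < n)
            \<and> periodic_pf (n - s) (\<lambda>j. q (j + s))
                 (\<lambda>\<delta>. snd (P (\<lambda>j. if j < s then 0 else \<delta> (j - s)))))"
proof -
  note pf = assms(5)
  define Q where "Q = (\<lambda>\<delta>. snd (P (\<lambda>j. if j < s then 0 else \<delta> (j - s))))"
  have pf1: "polyfract n (fst \<circ> P)" using polyfract_fst[OF pf] .
  have pf2: "polyfract n (snd \<circ> P)" using polyfract_snd[OF pf] .
  have ev: "pf_eval n P x = (pf_eval n (fst \<circ> P) x, pf_eval n (snd \<circ> P) x)" for x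
    using eval_pair[OF pf] .
  have k1: "\<forall>b. zscale (q j) b = 0 \<longrightarrow> b = (0::'b1)" if "s \<le> j" "j < n" for j
  proof (intro allI impI)
    fix b :: 'b1 assume "zscale (q j) b = 0"
    moreover have "coprime (q j) (int (card (UNIV :: 'b1 set)))"
      by (rule coprime_divisors[OF _ dvd_refl assms(4)]) (rule dvd_prodI, use that in auto)
    ultimately show "b = 0" using coprime_kill by blast
  qed
  have k2: "\<forall>b. zscale (q j) b = 0 \<longrightarrow> b = (0::'b2)" if "j < s" for j
  proof (intro allI impI)
    fix b :: 'b2 assume "zscale (q j) b = 0"
    moreover have "coprime (q j) (int (card (UNIV :: 'b2 set)))"
      by (rule coprime_divisors[OF _ dvd_refl assms(3)]) (rule dvd_prodI, use that in auto)
    ultimately show "b = 0" using coprime_kill by blast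
  qed
  have van1: "\<delta> j = 0" if "(fst \<circ> P) \<delta> \<noteq> 0" "n \<le> j" for \<delta> j
    using pf1 that unfolding polyfract_def by blast
  have van2: "\<delta> j = 0" if "(snd \<circ> P) \<delta> \<noteq> 0" "n \<le> j" for \<delta> j
    using pf2 that unfolding polyfract_def by blast
  have fin2: "finite {\<delta>. (snd \<circ> P) \<delta> \<noteq> 0}" using pf2 unfolding polyfract_def by blast
  have fin1: "finite {\<delta>. (fst \<circ> P) \<delta> \<noteq> 0}" using pf1 unfolding polyfract_def by blast
  have pfQ: "polyfract (n - s) Q"
  proof -
    have "{\<delta>. Q \<delta> \<noteq> 0} = (\<lambda>\<delta> j. if j < s then 0 else \<delta> (j - s)) -` {\<delta>. (snd \<circ> P) \<delta> \<noteq> 0}"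
      unfolding Q_def by auto
    moreover have "inj (\<lambda>\<delta> (j::nat). if j < s then 0 else \<delta> (j - s) :: nat)"
    proof (rule injI)
      fix a b :: "nat \<Rightarrow> nat"
      assume h: "(\<lambda>j. if j < s then 0 else a (j - s)) = (\<lambda>j. if j < s then 0 else b (j - s))"
      show "a = b"
      proof
        fix k show "a k = b k" using fun_cong[OF h, of "k+s"] by simp
      qed
    qed
    ultimately have "finite {\<delta>. Q \<delta> \<noteq> 0}" using finite_vimageI[OF fin2] by simp
    moreover have "\<forall>\<delta>. Q \<delta> \<noteq> 0 \<longrightarrow> (\<forall>j. n - s \<le> j \<longrightarrow> \<delta> j = 0)"
    proof (intro allI impI)
      fix \<delta> j assume "Q \<delta> \<noteq> 0" "n - s \<le> j"
      then have "(\<lambda>j. if j < s then 0 else \<delta> (j - s)) (j + s) = 0"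
        using van2[of "\<lambda>j. if j < s then 0 else \<delta> (j - s)" "j+s"] unfolding Q_def by auto
      then show "\<delta> j = 0" by simp
    qed
    ultimately show ?thesis unfolding polyfract_def by blast
  qed
  have shift: "pf_eval n (snd \<circ> P) x = pf_eval (n-s) Q (\<lambda>k. x (k+s))"
    if low: "\<forall>\<delta>. (snd \<circ> P) \<delta> \<noteq> 0 \<longrightarrow> (\<forall>i<s. \<delta> i = 0)" for x
    using eval_shift[OF pf2 assms(2) low, of x] unfolding Q_def comp_def .
  show ?thesis
  proof
    assume H: "periodic_pf n q P"
    then have per: "\<forall>x j. j < n \<longrightarrow> pf_eval n P (x(j := x j + q j)) = pf_eval n P x"
      unfolding periodic_pf_def by blast
    have per1: "\<forall>x. pf_eval n (fst \<circ> P) (x(j := x j + q j)) = pf_eval n (fst \<circ> P) x" if "j < n" for j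
    proof
      fix x
      have "pf_eval n P (x(j := x j + q j)) = pf_eval n P x" using per that by blast
      then have "fst (pf_eval n P (x(j := x j + q j))) = fst (pf_eval n P x)" by simp
      then show "pf_eval n (fst \<circ> P) (x(j := x j + q j)) = pf_eval n (fst \<circ> P) x"
        unfolding ev fst_conv .
    qed
    have per2: "\<forall>x. pf_eval n (snd \<circ> P) (x(j := x j + q j)) = pf_eval n (snd \<circ> P) x" if "j < n" for j
    proof
      fix x
      have "pf_eval n P (x(j := x j + q j)) = pf_eval n P x" using per that by blast
      then have "snd (pf_eval n P (x(j := x j + q j))) = snd (pf_eval n P x)" by simp
      then show "pf_eval n (snd \<circ> P) (x(j := x j + q j)) = pf_eval n (snd \<circ> P) x"
        unfolding ev snd_conv .
    qed
    have z1: "\<delta> j = 0" if "(fst \<circ> P) \<delta> \<noteq> 0" "s \<le> j" for \<delta> j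
    proof (cases "j < n")
      case True
      have k: "\<forall>b. zscale (q j) b = 0 \<longrightarrow> b = (0::'b1)" using k1[OF that(2) True] .
      have p: "\<forall>x. pf_eval n (fst \<circ> P) (x(j := x j + q j)) = pf_eval n (fst \<circ> P) x" using per1[OF True] .
      show ?thesis using no_involve[where Pc="fst \<circ> P" and n=n and j=j and q="q j", OF pf1 True k p that(1)] .
    next
      case False then show ?thesis using van1[OF that(1)] by simp
    qed
    have z2: "\<delta> j = 0" if "(snd \<circ> P) \<delta> \<noteq> 0" "j < s" for \<delta> j
    proof -
      have jn: "j < n" using that assms(2) by auto
      have k: "\<forall>b. zscale (q j) b = 0 \<longrightarrow> b = (0::'b2)" using k2[OF that(2)] .
      have p: "\<forall>x. pf_eval n (snd \<circ> P) (x(j := x j + q j)) = pf_eval n (snd \<circ> P) x" using per2[OF jn] .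
      show ?thesis using no_involve[where Pc="snd \<circ> P" and n=n and j=j and q="q j", OF pf2 jn k p that(1)] .
    qed
    have inv1: "\<forall>j. involves (fst \<circ> P) j \<longrightarrow> j < s"
    proof (intro allI impI)
      fix j assume "involves (fst \<circ> P) j"
      then obtain \<delta> where "0 < \<delta> j" "(fst \<circ> P) \<delta> \<noteq> 0" unfolding involves_def by blast
      then show "j < s" using z1[of \<delta> j] by (cases "s \<le> j") auto
    qed
    have inv2: "\<forall>j. involves (snd \<circ> P) j \<longrightarrow> s \<le> j \<and> j < n"
    proof (intro allI impI)
      fix j assume "involves (snd \<circ> P) j"
      then obtain \<delta> where "0 < \<delta> j" "(snd \<circ> P) \<delta> \<noteq> 0" unfolding involves_def by blast
      then show "s \<le> j \<and> j < n" using z2[of \<delta> j] van2[of \<delta> j] by (cases "j < s"; cases "n \<le> j") auto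
    qed
    have pfs: "polyfract s (fst \<circ> P)"
      unfolding polyfract_def using fin1 z1 by blast
    have ps: "periodic_pf s q (fst \<circ> P)"
      unfolding periodic_pf_def
    proof (intro conjI pfs allI impI)
      fix x j assume "j < s"
      then have "j < n" using assms(2) by simp
      then show "pf_eval s (fst \<circ> P) (x(j := x j + q j)) = pf_eval s (fst \<circ> P) x"
        using spec[OF per1[OF \<open>j < n\<close>], of x] eval_reduce[OF pfs assms(2)] by simp
    qed
    have low: "\<forall>\<delta>. (snd \<circ> P) \<delta> \<noteq> 0 \<longrightarrow> (\<forall>i<s. \<delta> i = 0)" using z2 by blast
    have pQ: "periodic_pf (n - s) (\<lambda>j. q (j + s)) Q"
      unfolding periodic_pf_def
    proof (intro conjI pfQ allI impI)
      fix y :: "nat \<Rightarrow> int" and j assume j: "j < n - s"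
      define x where "x i = y (i - s)" for i
      have xy: "(\<lambda>k. x (k+s)) = y" unfolding x_def by simp
      have xy2: "(\<lambda>k. (x(j+s := x (j+s) + q (j+s))) (k+s)) = y(j := y j + q (j + s))"
        unfolding x_def by (auto simp: fun_eq_iff)
      have "j + s < n" using j by simp
      then have "pf_eval n (snd \<circ> P) (x(j+s := x (j+s) + q (j+s))) = pf_eval n (snd \<circ> P) x"
        using per2 by blast
      then show "pf_eval (n - s) Q (y(j := y j + q (j + s))) = pf_eval (n - s) Q y"
        using shift[OF low, of x] shift[OF low, of "x(j+s := x (j+s) + q (j+s))"] xy xy2 by simp
    qed
    show "(\<forall>j. involves (fst \<circ> P) j \<longrightarrow> j < s)
            \<and> periodic_pf s q (fst \<circ> P)
            \<and> (\<forall>j. involves (snd \<circ> P) j \<longrightarrow> s \<le> j \<and> j < n)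
            \<and> periodic_pf (n - s) (\<lambda>j. q (j + s))
                 (\<lambda>\<delta>. snd (P (\<lambda>j. if j < s then 0 else \<delta> (j - s))))"
      using inv1 ps inv2 pQ unfolding Q_def by blast
  next
    assume R: "(\<forall>j. involves (fst \<circ> P) j \<longrightarrow> j < s)
            \<and> periodic_pf s q (fst \<circ> P)
            \<and> (\<forall>j. involves (snd \<circ> P) j \<longrightarrow> s \<le> j \<and> j < n)
            \<and> periodic_pf (n - s) (\<lambda>j. q (j + s))
                 (\<lambda>\<delta>. snd (P (\<lambda>j. if j < s then 0 else \<delta> (j - s))))"
    then have inv1: "\<forall>j. involves (fst \<circ> P) j \<longrightarrow> j < s"
      and ps: "periodic_pf s q (fst \<circ> P)"
      and inv2: "\<forall>j. involves (snd \<circ> P) j \<longrightarrow> s \<le> j \<and> j < n"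
      and pQ: "periodic_pf (n - s) (\<lambda>j. q (j + s)) Q" unfolding Q_def by blast+
    have z1: "\<forall>\<delta>. (fst \<circ> P) \<delta> \<noteq> 0 \<longrightarrow> \<delta> j = 0" if "s \<le> j" for j
      using inv1 that unfolding involves_def by (meson gr0I not_le)
    have z2: "\<forall>\<delta>. (snd \<circ> P) \<delta> \<noteq> 0 \<longrightarrow> \<delta> j = 0" if "j < s" for j
      using inv2 that unfolding involves_def by (meson gr0I not_le)
    have low: "\<forall>\<delta>. (snd \<circ> P) \<delta> \<noteq> 0 \<longrightarrow> (\<forall>i<s. \<delta> i = 0)" using z2 by blast
    have pfs: "polyfract s (fst \<circ> P)" and pers: "\<forall>x j. j < s \<longrightarrow> pf_eval s (fst \<circ> P) (x(j := x j + q j)) = pf_eval s (fst \<circ> P) x"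
      using ps unfolding periodic_pf_def by blast+
    have perQ: "\<forall>x j. j < n - s \<longrightarrow> pf_eval (n-s) Q (x(j := x j + q (j+s))) = pf_eval (n-s) Q x"
      using pQ unfolding periodic_pf_def by blast
    show "periodic_pf n q P"
      unfolding periodic_pf_def
    proof (intro conjI pf allI impI)
      fix x j assume j: "j < n"
      have e1: "pf_eval n (fst \<circ> P) (x(j := x j + q j)) = pf_eval n (fst \<circ> P) x"
      proof (cases "j < s")
        case True then show ?thesis using pers eval_reduce[OF pfs assms(2)] by simp
      next
        case False then have "s \<le> j" by simp
        show ?thesis by (rule eval_indep[OF z1[OF \<open>s \<le> j\<close>]])
      qed
      have e2: "pf_eval n (snd \<circ> P) (x(j := x j + q j)) = pf_eval n (snd \<circ> P) x"
      proof (cases "j < s")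
        case True show ?thesis by (rule eval_indep[OF z2[OF True]])
      next
        case False
        then have jj: "j - s < n - s" "j - s + s = j" using j by auto
        have "(\<lambda>k. (x(j := x j + q j)) (k+s)) = (\<lambda>k. x (k+s))((j - s) := x (j - s + s) + q (j - s + s))"
          using jj by (auto simp: fun_eq_iff)
        moreover have "pf_eval (n-s) Q ((\<lambda>k. x (k+s))((j - s) := x (j - s + s) + q (j - s + s))) = pf_eval (n-s) Q (\<lambda>k. x (k+s))"
          using spec[OF spec[OF perQ, of "\<lambda>k. x (k+s)"], of "j-s"] jj(1) by simp
        ultimately show ?thesis using shift[OF low, of x] shift[OF low, of "x(j := x j + q j)"] by simp
      qed
      show "pf_eval n P (x(j := x j + q j)) = pf_eval n P x" using ev e1 e2 by simp
    qed
  qed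
qed

end
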